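(* Let $\ell$ be a prime, $F$ a finite extension of $\mathbb{Q}_p$ for some prime $p$, and $\Xi$ an algebraic extension of $F$ with $\mu_\ell\subseteq\Xi$ and $\Xi^\times=\Xi^{\times\ell}$. Then $\ell^\infty$ divides the supernatural degree $[\Xi:F]$.
   Context: The supernatural degree of an algebraic extension is the lcm (as a supernatural number) of the degrees of its finite subextensions. *)

theory Defs
  imports "HOL-Algebra.Algebra" "HOL-Computational_Algebra.Computational_Algebra"
    "HOL-Library.Extended_Nat"
begin

definition padic_val_rat :: "nat \<Rightarrow> rat \<Rightarrow> int" where
  "padic_val_rat p q =
     (let (a, b) = quotient_of q
      in int (multiplicity (int p) a) - int (multiplicity (int p) b))"

definition padic_abs :: "nat \<Rightarrow> rat \<Rightarrow> real" where
  "padic_abs p q = (if q = 0 then 0 else real p powr (- real_of_int (padic_val_rat p q)))"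

definition padic_cauchy :: "nat \<Rightarrow> (nat \<Rightarrow> rat) \<Rightarrow> bool" where
  "padic_cauchy p S \<longleftrightarrow>
     (\<forall>e::real. 0 < e \<longrightarrow> (\<exists>N. \<forall>m n. N \<le> m \<longrightarrow> N \<le> n \<longrightarrow> padic_abs p (S m - S n) < e))"

definition padic_null :: "nat \<Rightarrow> (nat \<Rightarrow> rat) \<Rightarrow> bool" where
  "padic_null p S \<longleftrightarrow> (\<forall>e::real. 0 < e \<longrightarrow> (\<exists>N. \<forall>n. N \<le> n \<longrightarrow> padic_abs p (S n) < e))"

definition padic_class :: "nat \<Rightarrow> (nat \<Rightarrow> rat) \<Rightarrow> (nat \<Rightarrow> rat) set" where
  "padic_class p S = {T. padic_cauchy p T \<and> padic_null p (\<lambda>n. S n - T n)}"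

definition padic_rep :: "(nat \<Rightarrow> rat) set \<Rightarrow> (nat \<Rightarrow> rat)" where
  "padic_rep A = (SOME S. S \<in> A)"

definition Qp :: "nat \<Rightarrow> (nat \<Rightarrow> rat) set ring" where
  "Qp p = \<lparr> carrier = {padic_class p S | S. padic_cauchy p S},
            monoid.mult = (\<lambda>A B. padic_class p (\<lambda>n. padic_rep A n * padic_rep B n)),
            monoid.one = padic_class p (\<lambda>n. 1),
            ring.zero = padic_class p (\<lambda>n. 0),
            ring.add = (\<lambda>A B. padic_class p (\<lambda>n. padic_rep A n + padic_rep B n)) \<rparr>"

text \<open>Extensions are modelled as subfields of an ambient field \<open>R\<close>.
  A supernatural number is a function from primes to exponents in \<open>enat\<close>.
  The supernatural degree of an algebraic extension \<open>E/K\<close> is the lcm of the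
  degrees of its finite subextensions, i.e. at each prime \<open>q\<close> the supremum of
  the \<open>q\<close>-adic valuations of those degrees.\<close>
definition supernatural_degree ::
  "('a, 'b) ring_scheme \<Rightarrow> 'a set \<Rightarrow> 'a set \<Rightarrow> nat \<Rightarrow> enat" where
  "supernatural_degree R K E q =
     (SUP L \<in> {L. subfield L R \<and> K \<subseteq> L \<and> L \<subseteq> E \<and> ring.finite_dimension R K L}.
        enat (multiplicity q (ring.dim R K L)))"

end

theory Submission
  imports Defs
begin

lemma val_frac:
  assumes p: "Factorial_Ring.prime p" and a: "a \<noteq> 0" and b: "b \<noteq> 0"
  shows "padic_val_rat p (of_int a / of_int b) = int (multiplicity (int p) a) - int (multiplicity (int p) b)"
proof -
  obtain a' b' where q: "quotient_of (of_int a / of_int b) = (a', b')" by (cases "quotient_of (of_int a / of_int b)") auto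
  have b'pos: "b' > 0" using quotient_of_denom_pos[OF q] .
  have eq: "(of_int a / of_int b :: rat) = of_int a' / of_int b'" using quotient_of_div[OF q] .
  have "of_int a * of_int b' = (of_int a' * of_int b :: rat)" using eq b b'pos by (simp add: field_simps)
  hence eqi: "a * b' = a' * b" by (metis of_int_eq_iff of_int_mult)
  have a': "a' \<noteq> 0" using eqi a b'pos b by auto
  have pe: "prime_elem (int p)" using p by simp
  have "multiplicity (int p) (a * b') = multiplicity (int p) (a' * b)" using eqi by simp
  hence "multiplicity (int p) a + multiplicity (int p) b' = multiplicity (int p) a' + multiplicity (int p) b"
    using prime_elem_multiplicity_mult_distrib[OF pe] a b a' b'pos by (metis less_irrefl)
  thus ?thesis unfolding padic_val_rat_def q by simp
qed

lemma rat_frac_ex: "\<exists>a b. (x::rat) = of_int a / of_int b \<and> b \<noteq> 0"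
proof -
  obtain a b where q: "quotient_of x = (a, b)" by (cases "quotient_of x") auto
  show ?thesis using quotient_of_div[OF q] quotient_of_denom_pos[OF q] by (intro exI[of _ a] exI[of _ b]) auto
qed

lemma val_mult:
  assumes p: "Factorial_Ring.prime p" and "x \<noteq> 0" "y \<noteq> 0"
  shows "padic_val_rat p (x * y) = padic_val_rat p x + padic_val_rat p y"
proof -
  obtain a b where x: "x = of_int a / of_int b" "b \<noteq> 0" using rat_frac_ex by blast
  obtain e d where y: "y = of_int e / of_int d" "d \<noteq> 0" using rat_frac_ex by blast
  have a: "a \<noteq> 0" using x assms by auto
  have e: "e \<noteq> 0" using y assms by auto
  have xy: "x * y = of_int (a * e) / of_int (b * d)" using x y by simp
  have pe: "prime_elem (int p)" using p by simp
  have "padic_val_rat p (x*y) = int (multiplicity (int p) (a * e)) - int (multiplicity (int p) (b*d))"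
    unfolding xy using val_frac[OF p, of "a * e" "b*d"] a e x(2) y(2) by simp
  moreover have "padic_val_rat p x = int (multiplicity (int p) a) - int (multiplicity (int p) b)"
    using val_frac[OF p] a x by simp
  moreover have "padic_val_rat p y = int (multiplicity (int p) e) - int (multiplicity (int p) d)"
    using val_frac[OF p] e y by simp
  ultimately show ?thesis
    using a e x(2) y(2) prime_elem_multiplicity_mult_distrib[OF pe] by simp
qed

lemma val_add:
  assumes p: "Factorial_Ring.prime p" and "x \<noteq> 0" "y \<noteq> 0" "x + y \<noteq> 0"
  shows "padic_val_rat p (x + y) \<ge> min (padic_val_rat p x) (padic_val_rat p y)"
proof -
  obtain a b where x: "x = of_int a / of_int b" "b \<noteq> 0" using rat_frac_ex by blast
  obtain c d where y: "y = of_int c / of_int d" "d \<noteq> 0" using rat_frac_ex by blast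
  have a: "a \<noteq> 0" using x assms by auto
  have c: "c \<noteq> 0" using y assms by auto
  have xy: "x + y = of_int (a*d + c*b) / of_int (b*d)" using x y by (simp add: field_simps)
  have s: "a*d + c*b \<noteq> 0"
  proof
    assume "a*d + c*b = 0"
    hence "x + y = 0" unfolding xy by simp
    thus False using assms by simp
  qed
  have pe: "prime_elem (int p)" using p by simp
  define k where "k = min (multiplicity (int p) (a*d)) (multiplicity (int p) (c*b))"
  have "int p ^ k dvd a*d" unfolding k_def
    by (meson le_imp_power_dvd min.cobounded1 multiplicity_dvd dvd_trans)
  moreover have "int p ^ k dvd c*b" unfolding k_def
    by (meson le_imp_power_dvd min.cobounded2 multiplicity_dvd dvd_trans)
  ultimately have "int p ^ k dvd a*d + c*b" by simp
  hence ge: "multiplicity (int p) (a*d + c*b) \<ge> k"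
    using multiplicity_geI s pe by (metis not_prime_elem_zero prime_elem_def)
  have m1: "multiplicity (int p) (a*d) = multiplicity (int p) a + multiplicity (int p) d"
    using prime_elem_multiplicity_mult_distrib[OF pe] a y(2) by simp
  have m2: "multiplicity (int p) (c*b) = multiplicity (int p) c + multiplicity (int p) b"
    using prime_elem_multiplicity_mult_distrib[OF pe] c x(2) by simp
  have m3: "multiplicity (int p) (b*d) = multiplicity (int p) b + multiplicity (int p) d"
    using prime_elem_multiplicity_mult_distrib[OF pe] x(2) y(2) by simp
  have "padic_val_rat p (x+y) = int (multiplicity (int p) (a*d + c*b)) - int (multiplicity (int p) (b*d))"
    unfolding xy using val_frac[OF p, of "a*d + c*b" "b*d"] s x(2) y(2) by simp
  moreover have "padic_val_rat p x = int (multiplicity (int p) a) - int (multiplicity (int p) b)"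
    using val_frac[OF p] a x by simp
  moreover have "padic_val_rat p y = int (multiplicity (int p) c) - int (multiplicity (int p) d)"
    using val_frac[OF p] c y by simp
  ultimately show ?thesis using ge m1 m2 m3 unfolding k_def by auto
qed

lemma val_neg: assumes p: "Factorial_Ring.prime p" shows "padic_val_rat p (- x) = padic_val_rat p x"
proof (cases "x = 0")
  case True thus ?thesis by simp
next
  case False
  obtain a b where x: "x = of_int a / of_int b" "b \<noteq> 0" using rat_frac_ex by blast
  have a: "a \<noteq> 0" using x False by auto
  have "- x = of_int (-a) / of_int b" using x by simp
  thus ?thesis using val_frac[OF p, of "-a" b] val_frac[OF p, of a b] x a by simp
qed

lemma val_one: "padic_val_rat p 1 = 0"
  unfolding padic_val_rat_def by simp

lemma val_p: assumes p: "Factorial_Ring.prime p" shows "padic_val_rat p (of_nat p) = 1"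
proof -
  have "quotient_of (of_nat p) = (int p, 1)" by (simp add: quotient_of_rat_of_nat)
  moreover have "multiplicity (int p) (int p) = 1" using p by (simp add: multiplicity_self)
  ultimately show ?thesis unfolding padic_val_rat_def by simp
qed

lemma val_inverse: assumes p: "Factorial_Ring.prime p" and "x \<noteq> 0"
  shows "padic_val_rat p (inverse x) = - padic_val_rat p x"
  using val_mult[OF p, of x "inverse x"] assms val_one by simp

context fixes p :: nat assumes p: "Factorial_Ring.prime p"
begin

lemma p_gt1: "real p > 1" using p prime_gt_1_nat by auto

lemma pa_zero[simp]: "padic_abs p 0 = 0" unfolding padic_abs_def by simp

lemma pa_nonneg: "padic_abs p x \<ge> 0" unfolding padic_abs_def by simp

lemma pa_pos: "x \<noteq> 0 \<Longrightarrow> padic_abs p x > 0" unfolding padic_abs_def using p_gt1 by simp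

lemma pa_eq0_iff[simp]: "padic_abs p x = 0 \<longleftrightarrow> x = 0"
  using pa_pos[of x] by (auto simp: padic_abs_def)

lemma pa_mult: "padic_abs p (x * y) = padic_abs p x * padic_abs p y"
proof (cases "x = 0 \<or> y = 0")
  case True thus ?thesis by auto
next
  case False
  thus ?thesis unfolding padic_abs_def using val_mult[OF p, of x y]
    by (simp add: powr_add[symmetric])
qed

lemma pa_neg: "padic_abs p (- x) = padic_abs p x"
  unfolding padic_abs_def using val_neg[OF p] by simp

lemma pa_commute: "padic_abs p (x - y) = padic_abs p (y - x)"
  using pa_neg[of "x - y"] by simp

lemma pa_one[simp]: "padic_abs p 1 = 1" unfolding padic_abs_def using val_one p_gt1 by simp

lemma pa_p: "padic_abs p (of_nat p) = inverse (real p)"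
  unfolding padic_abs_def using val_p[OF p] p_gt1 by (simp add: powr_minus)

lemma pa_inverse: "padic_abs p (inverse x) = inverse (padic_abs p x)"
proof (cases "x = 0")
  case True thus ?thesis by simp
next
  case False
  hence "padic_abs p (x * inverse x) = 1" by simp
  thus ?thesis unfolding pa_mult using False pa_pos by (simp add: field_simps)
qed

lemma pa_ultra: "padic_abs p (x + y) \<le> max (padic_abs p x) (padic_abs p y)"
proof (cases "x = 0 \<or> y = 0 \<or> x + y = 0")
  case True thus ?thesis using pa_nonneg[of x] pa_nonneg[of y] by (auto simp: le_max_iff_disj)
next
  case False
  hence ne: "x \<noteq> 0" "y \<noteq> 0" "x + y \<noteq> 0" by auto
  have v: "padic_val_rat p (x + y) \<ge> min (padic_val_rat p x) (padic_val_rat p y)"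
    using val_add[OF p ne] .
  have "real p powr (- real_of_int (padic_val_rat p (x + y))) \<le>
        max (real p powr (- real_of_int (padic_val_rat p x))) (real p powr (- real_of_int (padic_val_rat p y)))"
    using v p_gt1 by (cases "padic_val_rat p x \<le> padic_val_rat p y") (auto simp: max_def min_def)
  thus ?thesis unfolding padic_abs_def using ne by simp
qed

lemma pa_triangle: "padic_abs p (x + y) \<le> padic_abs p x + padic_abs p y"
  using pa_ultra[of x y] pa_nonneg[of x] pa_nonneg[of y] by linarith

lemma pa_diff_ultra: "padic_abs p (x - z) \<le> max (padic_abs p (x - y)) (padic_abs p (y - z))"
  using pa_ultra[of "x - y" "y - z"] by simp

lemma pa_strict: assumes "padic_abs p y < padic_abs p x" shows "padic_abs p (x + y) = padic_abs p x"
proof -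
  have "padic_abs p (x + y) \<le> max (padic_abs p x) (padic_abs p y)" by (rule pa_ultra)
  moreover have "padic_abs p x \<le> max (padic_abs p (x + y)) (padic_abs p (- y))"
    using pa_ultra[of "x + y" "- y"] by simp
  ultimately show ?thesis using assms pa_neg[of y] by (auto simp: max_def split: if_splits)
qed

lemma pa_lip: "\<bar>padic_abs p x - padic_abs p y\<bar> \<le> padic_abs p (x - y)"
proof -
  have "padic_abs p x \<le> padic_abs p (x - y) + padic_abs p y" using pa_triangle[of "x - y" y] by simp
  moreover have "padic_abs p y \<le> padic_abs p (y - x) + padic_abs p x" using pa_triangle[of "y - x" x] by simp
  ultimately show ?thesis using pa_commute[of x y] by linarith
qed

lemma pa_values: "x \<noteq> 0 \<Longrightarrow> \<exists>k::int. padic_abs p x = real p powr real_of_int k"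
  unfolding padic_abs_def by (intro exI[of _ "- padic_val_rat p x"]) simp

end

lemma max_lt: "x \<le> max a b \<Longrightarrow> a < e \<Longrightarrow> b < e \<Longrightarrow> (x::real) < e" by auto

context fixes p :: nat assumes p: "Factorial_Ring.prime p"
begin

lemma null_iff: "padic_null p S \<longleftrightarrow> (\<lambda>n. padic_abs p (S n)) \<longlonglongrightarrow> 0"
proof -
  have "(\<lambda>n. padic_abs p (S n)) \<longlonglongrightarrow> 0 \<longleftrightarrow> (\<forall>e>0. \<exists>N. \<forall>n\<ge>N. norm (padic_abs p (S n) - 0) < e)"
    by (rule LIMSEQ_iff)
  also have "\<dots> \<longleftrightarrow> padic_null p S" unfolding padic_null_def using pa_nonneg[OF p] by simp
  finally show ?thesis by simp
qed

lemma null_zero: "padic_null p (\<lambda>n. 0)" unfolding null_iff pa_zero[OF p] by simp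

lemma null_add: assumes "padic_null p S" "padic_null p T" shows "padic_null p (\<lambda>n. S n + T n)"
proof -
  have h: "(\<lambda>n. padic_abs p (S n) + padic_abs p (T n)) \<longlonglongrightarrow> 0"
    using tendsto_add[OF assms[unfolded null_iff]] by simp
  have le: "\<And>n. padic_abs p (S n + T n) \<le> padic_abs p (S n) + padic_abs p (T n)"
    using pa_triangle[OF p] by simp
  show ?thesis unfolding null_iff
    apply (rule real_tendsto_sandwich[where f="\<lambda>n. 0" and h="\<lambda>n. padic_abs p (S n) + padic_abs p (T n)"])
    using h le pa_nonneg[OF p] by auto
qed

lemma null_neg: assumes "padic_null p S" shows "padic_null p (\<lambda>n. - S n)"
  using assms unfolding null_iff pa_neg[OF p] .

lemma null_diff: assumes "padic_null p S" "padic_null p T" shows "padic_null p (\<lambda>n. S n - T n)"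
  using null_add[OF assms(1) null_neg[OF assms(2)]] by simp

lemma null_ev: assumes "padic_null p S" "eventually (\<lambda>n. S n = T n) sequentially" shows "padic_null p T"
proof -
  have "eventually (\<lambda>n. padic_abs p (S n) = padic_abs p (T n)) sequentially"
    using assms(2) by (auto elim: eventually_mono)
  thus ?thesis using assms(1) unfolding null_iff by (rule Lim_transform_eventually[rotated])
qed

lemma null_cong: assumes "padic_null p S" "\<And>n. S n = T n" shows "padic_null p T"
proof -
  have "T = S" using assms(2) by (intro ext) simp
  thus ?thesis using assms(1) by simp
qed

lemma null_mult_bounded: assumes "padic_null p S" "\<And>n. padic_abs p (T n) \<le> B" shows "padic_null p (\<lambda>n. S n * T n)"
proof -
  have h: "(\<lambda>n. padic_abs p (S n) * B) \<longlonglongrightarrow> 0"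
    using tendsto_mult[OF assms(1)[unfolded null_iff] tendsto_const[of B]] by simp
  have le: "\<And>n. padic_abs p (S n * T n) \<le> padic_abs p (S n) * B"
    using assms(2) pa_nonneg[OF p] by (simp add: pa_mult[OF p] mult_left_mono)
  show ?thesis unfolding null_iff
    apply (rule real_tendsto_sandwich[where f="\<lambda>n. 0" and h="\<lambda>n. padic_abs p (S n) * B"])
    using h le pa_nonneg[OF p] by auto
qed

lemma cauchy_const: "padic_cauchy p (\<lambda>n. c)" unfolding padic_cauchy_def by (simp add: pa_zero[OF p])

lemma cauchy_add: assumes "padic_cauchy p S" "padic_cauchy p T" shows "padic_cauchy p (\<lambda>n. S n + T n)"
  unfolding padic_cauchy_def
proof (intro allI impI)
  fix e :: real assume e: "e > 0"
  obtain N1 where N1: "\<forall>m n. N1 \<le> m \<longrightarrow> N1 \<le> n \<longrightarrow> padic_abs p (S m - S n) < e"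
    using assms(1) e unfolding padic_cauchy_def by blast
  obtain N2 where N2: "\<forall>m n. N2 \<le> m \<longrightarrow> N2 \<le> n \<longrightarrow> padic_abs p (T m - T n) < e"
    using assms(2) e unfolding padic_cauchy_def by blast
  show "\<exists>N. \<forall>m n. N \<le> m \<longrightarrow> N \<le> n \<longrightarrow> padic_abs p (S m + T m - (S n + T n)) < e"
  proof (intro exI[of _ "max N1 N2"] allI impI)
    fix m n assume "max N1 N2 \<le> m" "max N1 N2 \<le> n"
    hence a: "padic_abs p (S m - S n) < e" "padic_abs p (T m - T n) < e" using N1 N2 by auto
    have "padic_abs p ((S m - S n) + (T m - T n)) \<le> max (padic_abs p (S m - S n)) (padic_abs p (T m - T n))"
      by (rule pa_ultra[OF p])
    moreover have "S m + T m - (S n + T n) = (S m - S n) + (T m - T n)" by simp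
    ultimately show "padic_abs p (S m + T m - (S n + T n)) < e" using a by (metis max_lt)
  qed
qed

lemma cauchy_neg: assumes "padic_cauchy p S" shows "padic_cauchy p (\<lambda>n. - S n)"
proof -
  have "\<And>m n. padic_abs p (- S m - - S n) = padic_abs p (S m - S n)"
    using pa_neg[OF p] by (metis minus_diff_eq minus_diff_minus)
  thus ?thesis using assms unfolding padic_cauchy_def by simp
qed

lemma cauchy_bounded: assumes "padic_cauchy p S" shows "\<exists>B. \<forall>n. padic_abs p (S n) \<le> B"
proof -
  obtain N where N: "\<forall>m n. N \<le> m \<longrightarrow> N \<le> n \<longrightarrow> padic_abs p (S m - S n) < 1"
    using assms unfolding padic_cauchy_def by (meson zero_less_one)
  define B where "B = 1 + padic_abs p (S N) + (\<Sum>i<N. padic_abs p (S i))"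
  have sn: "(\<Sum>i<N. padic_abs p (S i)) \<ge> 0" by (intro sum_nonneg) (simp add: pa_nonneg[OF p])
  have "padic_abs p (S n) \<le> B" for n
  proof (cases "n < N")
    case True
    have "padic_abs p (S n) \<le> (\<Sum>i<N. padic_abs p (S i))"
      using True by (intro member_le_sum) (auto simp: pa_nonneg[OF p])
    thus ?thesis unfolding B_def using pa_nonneg[OF p, of "S N"] by linarith
  next
    case False
    hence "padic_abs p (S n - S N) < 1" using N by auto
    moreover have "padic_abs p (S n) \<le> max (padic_abs p (S n - S N)) (padic_abs p (S N))"
      using pa_ultra[OF p, of "S n - S N" "S N"] by simp
    ultimately show ?thesis unfolding B_def using sn pa_nonneg[OF p, of "S N"] by auto
  qed
  thus ?thesis by blast
qed

lemma cauchy_mult: assumes "padic_cauchy p S" "padic_cauchy p T" shows "padic_cauchy p (\<lambda>n. S n * T n)"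
  unfolding padic_cauchy_def
proof (intro allI impI)
  fix e :: real assume e: "e > 0"
  obtain B1 where B1: "\<And>n. padic_abs p (S n) \<le> B1" using cauchy_bounded[OF assms(1)] by blast
  obtain B2 where B2: "\<And>n. padic_abs p (T n) \<le> B2" using cauchy_bounded[OF assms(2)] by blast
  define B where "B = max 1 (max B1 B2)"
  have B: "B > 0" "\<And>n. padic_abs p (S n) \<le> B" "\<And>n. padic_abs p (T n) \<le> B"
    unfolding B_def using B1 B2 by (auto simp: le_max_iff_disj)
  have eB: "e / B > 0" using e B by simp
  obtain N1 where N1: "\<forall>m n. N1 \<le> m \<longrightarrow> N1 \<le> n \<longrightarrow> padic_abs p (S m - S n) < e / B"
    using assms(1) eB unfolding padic_cauchy_def by blast
  obtain N2 where N2: "\<forall>m n. N2 \<le> m \<longrightarrow> N2 \<le> n \<longrightarrow> padic_abs p (T m - T n) < e / B"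
    using assms(2) eB unfolding padic_cauchy_def by blast
  show "\<exists>N. \<forall>m n. N \<le> m \<longrightarrow> N \<le> n \<longrightarrow> padic_abs p (S m * T m - S n * T n) < e"
  proof (intro exI[of _ "max N1 N2"] allI impI)
    fix m n assume "max N1 N2 \<le> m" "max N1 N2 \<le> n"
    hence a: "padic_abs p (S m - S n) < e / B" "padic_abs p (T m - T n) < e / B" using N1 N2 by auto
    have x1: "padic_abs p (S m * (T m - T n)) < e"
    proof -
      have "padic_abs p (S m * (T m - T n)) = padic_abs p (S m) * padic_abs p (T m - T n)" by (rule pa_mult[OF p])
      also have "\<dots> \<le> B * padic_abs p (T m - T n)" by (rule mult_right_mono[OF B(2) pa_nonneg[OF p]])
      also have "\<dots> < B * (e / B)" by (rule mult_strict_left_mono[OF a(2) B(1)])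
      finally show ?thesis using B(1) by simp
    qed
    have x2: "padic_abs p ((S m - S n) * T n) < e"
    proof -
      have "padic_abs p ((S m - S n) * T n) = padic_abs p (T n) * padic_abs p (S m - S n)" by (simp add: pa_mult[OF p])
      also have "\<dots> \<le> B * padic_abs p (S m - S n)" by (rule mult_right_mono[OF B(3) pa_nonneg[OF p]])
      also have "\<dots> < B * (e / B)" by (rule mult_strict_left_mono[OF a(1) B(1)])
      finally show ?thesis using B(1) by simp
    qed
    have "S m * T m - S n * T n = S m * (T m - T n) + (S m - S n) * T n" by (simp add: algebra_simps)
    moreover have "padic_abs p (S m * (T m - T n) + (S m - S n) * T n) \<le> max (padic_abs p (S m * (T m - T n))) (padic_abs p ((S m - S n) * T n))"
      by (rule pa_ultra[OF p])
    ultimately show "padic_abs p (S m * T m - S n * T n) < e" using x1 x2 by auto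
  qed
qed

lemma cauchy_ev_const: assumes "padic_cauchy p S" "\<not> padic_null p S"
  shows "\<exists>N c. c > 0 \<and> (\<forall>n\<ge>N. padic_abs p (S n) = c \<and> S n \<noteq> 0) \<and> (\<exists>k::int. c = real p powr k)"
proof -
  obtain e where e: "e > 0" "\<forall>N. \<exists>n\<ge>N. padic_abs p (S n) \<ge> e"
    using assms(2) unfolding padic_null_def by (auto simp: not_less)
  obtain N where N: "\<forall>m n. N \<le> m \<longrightarrow> N \<le> n \<longrightarrow> padic_abs p (S m - S n) < e"
    using assms(1) e unfolding padic_cauchy_def by blast
  obtain n0 where n0: "n0 \<ge> N" "padic_abs p (S n0) \<ge> e" using e by blast
  have "padic_abs p (S n) = padic_abs p (S n0)" if "n \<ge> N" for n
  proof -
    have "padic_abs p (S n - S n0) < padic_abs p (S n0)" using N n0 that by fastforce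
    hence "padic_abs p (S n0 + (S n - S n0)) = padic_abs p (S n0)" by (rule pa_strict[OF p])
    thus ?thesis by simp
  qed
  moreover have "S n0 \<noteq> 0" using n0 e by (auto simp: pa_zero[OF p])
  moreover have pos: "padic_abs p (S n0) > 0" using n0 e by auto
  ultimately show ?thesis using pa_values[OF p \<open>S n0 \<noteq> 0\<close>]
    by (intro exI[of _ N] exI[of _ "padic_abs p (S n0)"]) (auto simp del: pa_eq0_iff simp: pa_eq0_iff[OF p, symmetric])
qed

lemma cauchy_inverse: assumes "padic_cauchy p S" "\<not> padic_null p S"
  shows "padic_cauchy p (\<lambda>n. inverse (S n))"
  unfolding padic_cauchy_def
proof (intro allI impI)
  fix e :: real assume e: "e > 0"
  obtain N0 c where c: "c > 0" "\<forall>n\<ge>N0. padic_abs p (S n) = c \<and> S n \<noteq> 0"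
    using cauchy_ev_const[OF assms] by blast
  have ec: "e * (c * c) > 0" using e c by simp
  obtain N1 where N1: "\<forall>m n. N1 \<le> m \<longrightarrow> N1 \<le> n \<longrightarrow> padic_abs p (S m - S n) < e * (c * c)"
    using assms(1) ec unfolding padic_cauchy_def by blast
  show "\<exists>N. \<forall>m n. N \<le> m \<longrightarrow> N \<le> n \<longrightarrow> padic_abs p (inverse (S m) - inverse (S n)) < e"
  proof (intro exI[of _ "max N0 N1"] allI impI)
    fix m n assume "max N0 N1 \<le> m" "max N0 N1 \<le> n"
    hence a: "padic_abs p (S m - S n) < e * (c * c)" "padic_abs p (S m) = c" "padic_abs p (S n) = c" "S m \<noteq> 0" "S n \<noteq> 0"
      using N1 c by auto
    have eq: "inverse (S m) - inverse (S n) = (S n - S m) * inverse (S m) * inverse (S n)"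
      using a(4,5) by (simp add: field_simps)
    have "padic_abs p (inverse (S m) - inverse (S n)) = padic_abs p (S n - S m) * inverse (padic_abs p (S m)) * inverse (padic_abs p (S n))"
      unfolding eq by (simp only: pa_mult[OF p] pa_inverse[OF p])
    also have "\<dots> = padic_abs p (S m - S n) / (c * c)"
      unfolding a(2,3) pa_commute[OF p, of "S n" "S m"] by (simp add: divide_inverse)
    also have "\<dots> < e" using a(1) c by (simp add: pos_divide_less_eq)
    finally show "padic_abs p (inverse (S m) - inverse (S n)) < e" .
  qed
qed

lemma null_cauchy: assumes "padic_null p S" shows "padic_cauchy p S"
  unfolding padic_cauchy_def
proof (intro allI impI)
  fix e :: real assume "e > 0"
  then obtain N where N: "\<forall>n\<ge>N. padic_abs p (S n) < e" using assms unfolding padic_null_def by blast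
  show "\<exists>N. \<forall>m n. N \<le> m \<longrightarrow> N \<le> n \<longrightarrow> padic_abs p (S m - S n) < e"
  proof (intro exI[of _ N] allI impI)
    fix m n assume "N \<le> m" "N \<le> n"
    hence "padic_abs p (S m) < e" "padic_abs p (- S n) < e" using N pa_neg[OF p, of "S n"] by auto
    moreover have "padic_abs p (S m + - S n) \<le> max (padic_abs p (S m)) (padic_abs p (- S n))" by (rule pa_ultra[OF p])
    ultimately show "padic_abs p (S m - S n) < e" by (simp only: diff_conv_add_uminus max_lt)
  qed
qed

end

definition absQ :: "nat \<Rightarrow> (nat \<Rightarrow> rat) set \<Rightarrow> real" where
  "absQ p A = lim (\<lambda>n. padic_abs p (padic_rep A n))"

definition NegQ :: "nat \<Rightarrow> (nat \<Rightarrow> rat) set \<Rightarrow> (nat \<Rightarrow> rat) set" where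
  "NegQ p A = padic_class p (\<lambda>n. - padic_rep A n)"

definition InvQ :: "nat \<Rightarrow> (nat \<Rightarrow> rat) set \<Rightarrow> (nat \<Rightarrow> rat) set" where
  "InvQ p A = padic_class p (\<lambda>n. inverse (padic_rep A n))"

lemma Qp_simps:
  "carrier (Qp p) = {padic_class p S | S. padic_cauchy p S}"
  "A \<otimes>\<^bsub>Qp p\<^esub> B = padic_class p (\<lambda>n. padic_rep A n * padic_rep B n)"
  "A \<oplus>\<^bsub>Qp p\<^esub> B = padic_class p (\<lambda>n. padic_rep A n + padic_rep B n)"
  "\<one>\<^bsub>Qp p\<^esub> = padic_class p (\<lambda>n. 1)"
  "\<zero>\<^bsub>Qp p\<^esub> = padic_class p (\<lambda>n. 0)"
  by (simp_all add: Qp_def)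

context fixes p :: nat assumes p: "Factorial_Ring.prime p"
begin

lemma in_cls: "T \<in> padic_class p S \<longleftrightarrow> padic_cauchy p T \<and> padic_null p (\<lambda>n. S n - T n)"
  unfolding padic_class_def by simp

lemma cls_mem: "padic_cauchy p S \<Longrightarrow> S \<in> padic_class p S"
  unfolding in_cls using null_zero[OF p] by simp

lemma rep_cls: "padic_cauchy p S \<Longrightarrow> padic_rep (padic_class p S) \<in> padic_class p S"
  unfolding padic_rep_def by (rule someI[of _ S]) (rule cls_mem)

lemma cls_eq: assumes "padic_cauchy p S" "padic_cauchy p T" "padic_null p (\<lambda>n. S n - T n)"
  shows "padic_class p S = padic_class p T"
proof -
  have 1: "padic_null p (\<lambda>n. T n - U n)" if "padic_null p (\<lambda>n. S n - U n)" for U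
    using null_diff[OF p that assms(3)] by simp
  have 2: "padic_null p (\<lambda>n. S n - U n)" if "padic_null p (\<lambda>n. T n - U n)" for U
    using null_add[OF p that assms(3)] by simp
  have "U \<in> padic_class p S \<longleftrightarrow> U \<in> padic_class p T" for U unfolding in_cls using 1 2 by blast
  thus ?thesis by blast
qed

lemma cls_eq_iff: assumes "padic_cauchy p S" "padic_cauchy p T"
  shows "padic_class p S = padic_class p T \<longleftrightarrow> padic_null p (\<lambda>n. S n - T n)"
proof
  assume "padic_class p S = padic_class p T"
  hence "T \<in> padic_class p S" using cls_mem[OF assms(2)] by simp
  thus "padic_null p (\<lambda>n. S n - T n)" unfolding in_cls by simp
qed (rule cls_eq[OF assms])

lemma carrierE: assumes "A \<in> carrier (Qp p)"
  shows "padic_cauchy p (padic_rep A)" "A = padic_class p (padic_rep A)"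
proof -
  obtain S where S: "A = padic_class p S" "padic_cauchy p S" using assms unfolding Qp_simps by blast
  have r: "padic_rep A \<in> padic_class p S" using rep_cls[OF S(2)] S(1) by simp
  thus "padic_cauchy p (padic_rep A)" unfolding in_cls by simp
  thus "A = padic_class p (padic_rep A)" using S r cls_eq[OF S(2)] unfolding in_cls by blast
qed

lemma cls_carrier: "padic_cauchy p S \<Longrightarrow> padic_class p S \<in> carrier (Qp p)"
  unfolding Qp_simps by blast

lemma rep_null: assumes "padic_cauchy p S"
  shows "padic_null p (\<lambda>n. S n - padic_rep (padic_class p S) n)" "padic_cauchy p (padic_rep (padic_class p S))"
  using rep_cls[OF assms] unfolding in_cls by auto

lemma mult_closed: "A \<in> carrier (Qp p) \<Longrightarrow> B \<in> carrier (Qp p) \<Longrightarrow> A \<otimes>\<^bsub>Qp p\<^esub> B \<in> carrier (Qp p)"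
  unfolding Qp_simps(2) by (intro cls_carrier cauchy_mult[OF p] carrierE)

lemma add_closed: "A \<in> carrier (Qp p) \<Longrightarrow> B \<in> carrier (Qp p) \<Longrightarrow> A \<oplus>\<^bsub>Qp p\<^esub> B \<in> carrier (Qp p)"
  unfolding Qp_simps(3) by (intro cls_carrier cauchy_add[OF p] carrierE)

lemma one_closed: "\<one>\<^bsub>Qp p\<^esub> \<in> carrier (Qp p)"
  unfolding Qp_simps(4) by (intro cls_carrier cauchy_const[OF p])

lemma zero_closed: "\<zero>\<^bsub>Qp p\<^esub> \<in> carrier (Qp p)"
  unfolding Qp_simps(5) by (intro cls_carrier cauchy_const[OF p])

lemma pow_closed: "A \<in> carrier (Qp p) \<Longrightarrow> A [^]\<^bsub>Qp p\<^esub> (n::nat) \<in> carrier (Qp p)"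
  by (induct n) (auto intro: mult_closed one_closed)

lemma abs_convergent: assumes "padic_cauchy p S" shows "convergent (\<lambda>n. padic_abs p (S n))"
proof (rule real_Cauchy_convergent, rule metric_CauchyI)
  fix e :: real assume "e > 0"
  then obtain N where N: "\<forall>m n. N \<le> m \<longrightarrow> N \<le> n \<longrightarrow> padic_abs p (S m - S n) < e"
    using assms unfolding padic_cauchy_def by blast
  show "\<exists>M. \<forall>m\<ge>M. \<forall>n\<ge>M. dist (padic_abs p (S m)) (padic_abs p (S n)) < e"
  proof (intro exI[of _ N] allI impI)
    fix m n assume "N \<le> m" "N \<le> n"
    thus "dist (padic_abs p (S m)) (padic_abs p (S n)) < e"
      using N pa_lip[OF p, of "S m" "S n"] unfolding dist_real_def by fastforce
  qed
qed

lemma abs_diff_null: assumes "padic_null p (\<lambda>n. S n - T n)"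
  shows "(\<lambda>n. padic_abs p (S n) - padic_abs p (T n)) \<longlonglongrightarrow> 0"
proof -
  have h: "(\<lambda>n. padic_abs p (S n - T n)) \<longlonglongrightarrow> 0" using assms unfolding null_iff[OF p] .
  have f: "(\<lambda>n. - padic_abs p (S n - T n)) \<longlonglongrightarrow> 0" using tendsto_minus[OF h] by simp
  have le: "\<And>n. \<bar>padic_abs p (S n) - padic_abs p (T n)\<bar> \<le> padic_abs p (S n - T n)"
    by (rule pa_lip[OF p])
  have le1: "- padic_abs p (S n - T n) \<le> padic_abs p (S n) - padic_abs p (T n)" for n
    using le[of n] unfolding abs_le_iff by linarith
  have le2: "padic_abs p (S n) - padic_abs p (T n) \<le> padic_abs p (S n - T n)" for n
    using le[of n] unfolding abs_le_iff by linarith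
  show ?thesis
    apply (rule real_tendsto_sandwich[where f="\<lambda>n. - padic_abs p (S n - T n)" and h="\<lambda>n. padic_abs p (S n - T n)"])
    apply (rule always_eventually, rule allI, rule le1)
    apply (rule always_eventually, rule allI, rule le2)
    using h f by auto
qed

lemma absQ_cls: assumes "padic_cauchy p S"
  shows "(\<lambda>n. padic_abs p (S n)) \<longlonglongrightarrow> absQ p (padic_class p S)"
proof -
  let ?T = "padic_rep (padic_class p S)"
  have T: "padic_cauchy p ?T" "padic_null p (\<lambda>n. S n - ?T n)" using rep_null[OF assms] by auto
  have lT: "(\<lambda>n. padic_abs p (?T n)) \<longlonglongrightarrow> absQ p (padic_class p S)"
    unfolding absQ_def using abs_convergent[OF T(1)] by (simp add: convergent_LIMSEQ_iff)
  have "(\<lambda>n. padic_abs p (?T n) + (padic_abs p (S n) - padic_abs p (?T n))) \<longlonglongrightarrow> absQ p (padic_class p S) + 0"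
    by (rule tendsto_add[OF lT abs_diff_null[OF T(2)]])
  thus ?thesis by simp
qed

lemma absQ_tendsto: assumes "A \<in> carrier (Qp p)"
  shows "(\<lambda>n. padic_abs p (padic_rep A n)) \<longlonglongrightarrow> absQ p A"
  using absQ_cls[OF carrierE(1)[OF assms]] carrierE(2)[OF assms] by simp

lemma absQ_const: "absQ p (padic_class p (\<lambda>n. c)) = padic_abs p c"
  using absQ_cls[OF cauchy_const[OF p, of c]] by (simp add: LIMSEQ_const_iff)

lemma absQ_mult: assumes "A \<in> carrier (Qp p)" "B \<in> carrier (Qp p)"
  shows "absQ p (A \<otimes>\<^bsub>Qp p\<^esub> B) = absQ p A * absQ p B"
proof -
  have c: "padic_cauchy p (\<lambda>n. padic_rep A n * padic_rep B n)"
    by (intro cauchy_mult[OF p] carrierE assms)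
  have "(\<lambda>n. padic_abs p (padic_rep A n * padic_rep B n)) \<longlonglongrightarrow> absQ p A * absQ p B"
    unfolding pa_mult[OF p] by (intro tendsto_mult absQ_tendsto assms)
  thus ?thesis unfolding Qp_simps(2) using absQ_cls[OF c] LIMSEQ_unique by blast
qed

lemma absQ_pow: assumes "A \<in> carrier (Qp p)"
  shows "absQ p (A [^]\<^bsub>Qp p\<^esub> (n::nat)) = absQ p A ^ n"
  by (induct n) (simp_all add: absQ_mult assms pow_closed Qp_simps(4) absQ_const pa_one[OF p])

lemma nonzero_not_null: assumes "A \<in> carrier (Qp p)" "A \<noteq> \<zero>\<^bsub>Qp p\<^esub>"
  shows "\<not> padic_null p (padic_rep A)"
proof
  assume n: "padic_null p (padic_rep A)"
  have "padic_class p (padic_rep A) = padic_class p (\<lambda>n. 0)"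
    using n by (intro cls_eq carrierE assms cauchy_const[OF p]) simp
  thus False using assms carrierE(2)[OF assms(1)] unfolding Qp_simps by simp
qed

lemma absQ_values: assumes "A \<in> carrier (Qp p)" "A \<noteq> \<zero>\<^bsub>Qp p\<^esub>"
  shows "\<exists>k::int. absQ p A = real p powr k"
proof -
  obtain N c where c: "c > 0" "\<forall>n\<ge>N. padic_abs p (padic_rep A n) = c \<and> padic_rep A n \<noteq> 0" "\<exists>k::int. c = real p powr k"
    using cauchy_ev_const[OF p carrierE(1)[OF assms(1)] nonzero_not_null[OF assms]] by blast
  have "eventually (\<lambda>n. padic_abs p (padic_rep A n) = c) sequentially"
    using c(2) eventually_sequentially by blast
  hence "(\<lambda>n. padic_abs p (padic_rep A n)) \<longlonglongrightarrow> c"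
    by (rule Lim_transform_eventually[OF tendsto_const[of c], OF eventually_mono]) auto
  hence "absQ p A = c" using absQ_tendsto[OF assms(1)] LIMSEQ_unique by blast
  thus ?thesis using c(3) by simp
qed

lemma neg_closed: "A \<in> carrier (Qp p) \<Longrightarrow> NegQ p A \<in> carrier (Qp p)"
  unfolding NegQ_def by (intro cls_carrier cauchy_neg[OF p] carrierE)

lemma add_neg: assumes "A \<in> carrier (Qp p)" shows "A \<oplus>\<^bsub>Qp p\<^esub> NegQ p A = \<zero>\<^bsub>Qp p\<^esub>"
proof -
  let ?S = "\<lambda>n. - padic_rep A n"
  have cS: "padic_cauchy p ?S" by (intro cauchy_neg[OF p] carrierE assms)
  have n1: "padic_null p (\<lambda>n. ?S n - padic_rep (NegQ p A) n)" unfolding NegQ_def using rep_null[OF cS] by simp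
  have c2: "padic_cauchy p (padic_rep (NegQ p A))" unfolding NegQ_def using rep_null[OF cS] by simp
  have "padic_null p (\<lambda>n. (padic_rep A n + padic_rep (NegQ p A) n) - 0)"
    using null_neg[OF p n1] by (simp add: add.commute)
  thus ?thesis unfolding Qp_simps
    by (intro cls_eq cauchy_add[OF p] carrierE assms c2 cauchy_const[OF p])
qed

lemma add_neg_zero_imp_eq: assumes "A \<in> carrier (Qp p)" "B \<in> carrier (Qp p)"
  and "A \<oplus>\<^bsub>Qp p\<^esub> NegQ p B = \<zero>\<^bsub>Qp p\<^esub>" shows "A = B"
proof -
  let ?S = "\<lambda>n. - padic_rep B n"
  have cS: "padic_cauchy p ?S" by (intro cauchy_neg[OF p] carrierE assms)
  have n1: "padic_null p (\<lambda>n. ?S n - padic_rep (NegQ p B) n)" unfolding NegQ_def using rep_null[OF cS] by simp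
  have c2: "padic_cauchy p (padic_rep (NegQ p B))" unfolding NegQ_def using rep_null[OF cS] by simp
  have cA: "padic_cauchy p (padic_rep A)" "padic_cauchy p (padic_rep B)" using carrierE assms by auto
  have "padic_class p (\<lambda>n. padic_rep A n + padic_rep (NegQ p B) n) = padic_class p (\<lambda>n. 0)"
    using assms(3) unfolding Qp_simps .
  hence n2: "padic_null p (\<lambda>n. (padic_rep A n + padic_rep (NegQ p B) n) - 0)"
    using cls_eq_iff[OF cauchy_add[OF p cA(1) c2] cauchy_const[OF p]] by blast
  have "padic_null p (\<lambda>n. padic_rep A n - padic_rep B n)"
    using null_add[OF p n2 n1] by simp
  hence "padic_class p (padic_rep A) = padic_class p (padic_rep B)"
    by (intro cls_eq cA)
  thus ?thesis using carrierE(2) assms by metis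
qed

lemma inv_closed: "A \<in> carrier (Qp p) \<Longrightarrow> A \<noteq> \<zero>\<^bsub>Qp p\<^esub> \<Longrightarrow> InvQ p A \<in> carrier (Qp p)"
  unfolding InvQ_def by (intro cls_carrier cauchy_inverse[OF p] carrierE nonzero_not_null)

lemma mult_inv: assumes "A \<in> carrier (Qp p)" "A \<noteq> \<zero>\<^bsub>Qp p\<^esub>"
  shows "A \<otimes>\<^bsub>Qp p\<^esub> InvQ p A = \<one>\<^bsub>Qp p\<^esub>"
proof -
  let ?S = "\<lambda>n. inverse (padic_rep A n)"
  have cA: "padic_cauchy p (padic_rep A)" using carrierE assms by auto
  have cS: "padic_cauchy p ?S" by (intro cauchy_inverse[OF p] cA nonzero_not_null assms)
  have n1: "padic_null p (\<lambda>n. ?S n - padic_rep (InvQ p A) n)" unfolding InvQ_def using rep_null[OF cS] by simp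
  have c2: "padic_cauchy p (padic_rep (InvQ p A))" unfolding InvQ_def using rep_null[OF cS] by simp
  obtain N c where c: "c > 0" "\<forall>n\<ge>N. padic_abs p (padic_rep A n) = c \<and> padic_rep A n \<noteq> 0"
    using cauchy_ev_const[OF p cA nonzero_not_null[OF assms]] by blast
  obtain B where B: "\<And>n. padic_abs p (padic_rep A n) \<le> B" using cauchy_bounded[OF p cA] by blast
  have n3: "padic_null p (\<lambda>n. (?S n - padic_rep (InvQ p A) n) * padic_rep A n)"
    by (rule null_mult_bounded[OF p n1 B])
  have "eventually (\<lambda>n. (?S n - padic_rep (InvQ p A) n) * padic_rep A n = 1 - padic_rep A n * padic_rep (InvQ p A) n) sequentially"
    unfolding eventually_sequentially using c(2) by (intro exI[of _ N]) (auto simp: algebra_simps)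
  hence "padic_null p (\<lambda>n. 1 - padic_rep A n * padic_rep (InvQ p A) n)" by (rule null_ev[OF p n3])
  hence "padic_null p (\<lambda>n. padic_rep A n * padic_rep (InvQ p A) n - 1)"
    using null_neg[OF p] by fastforce
  thus ?thesis unfolding Qp_simps
    by (intro cls_eq cauchy_mult[OF p] cA c2 cauchy_const[OF p])
qed

lemma zero_add_zero: "\<zero>\<^bsub>Qp p\<^esub> \<oplus>\<^bsub>Qp p\<^esub> \<zero>\<^bsub>Qp p\<^esub> = \<zero>\<^bsub>Qp p\<^esub>"
proof -
  have c: "padic_cauchy p (padic_rep (\<zero>\<^bsub>Qp p\<^esub>))" using carrierE(1)[OF zero_closed] .
  have n: "padic_null p (\<lambda>n. 0 - padic_rep (\<zero>\<^bsub>Qp p\<^esub>) n)"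
    unfolding Qp_simps using rep_null(1)[OF cauchy_const[OF p, of 0]] by simp
  have "padic_null p (\<lambda>n. (padic_rep (\<zero>\<^bsub>Qp p\<^esub>) n + padic_rep (\<zero>\<^bsub>Qp p\<^esub>) n) - 0)"
    using null_neg[OF p null_add[OF p n n]] by simp
  thus ?thesis unfolding Qp_simps(3) apply (subst (3) Qp_simps(5))
    by (intro cls_eq cauchy_add[OF p] c cauchy_const[OF p])
qed

end

context
  fixes p :: nat and R :: "('a, 'b) ring_scheme" and h
  assumes p: "Factorial_Ring.prime p" and R: "field R" and h: "h \<in> ring_hom (Qp p) R"
begin

interpretation R: field R by (rule R)

lemma h_closed: "A \<in> carrier (Qp p) \<Longrightarrow> h A \<in> carrier R"
  using ring_hom_closed[OF h] .

lemma h_zero: "h \<zero>\<^bsub>Qp p\<^esub> = \<zero>\<^bsub>R\<^esub>"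
proof -
  have c: "h \<zero>\<^bsub>Qp p\<^esub> \<in> carrier R" using h_closed zero_closed[OF p] by blast
  have "h \<zero>\<^bsub>Qp p\<^esub> \<oplus>\<^bsub>R\<^esub> h \<zero>\<^bsub>Qp p\<^esub> = h \<zero>\<^bsub>Qp p\<^esub>"
    using ring_hom_add[OF h zero_closed[OF p] zero_closed[OF p]] zero_add_zero[OF p] by simp
  thus ?thesis using c by (metis R.add.l_cancel_one' R.zero_closed)
qed

lemma h_neg: assumes "A \<in> carrier (Qp p)" shows "h (NegQ p A) = \<ominus>\<^bsub>R\<^esub> h A"
proof -
  have "h A \<oplus>\<^bsub>R\<^esub> h (NegQ p A) = \<zero>\<^bsub>R\<^esub>"
    using ring_hom_add[OF h assms neg_closed[OF p assms]] add_neg[OF p assms] h_zero by simp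
  thus ?thesis using h_closed assms neg_closed[OF p assms]
    by (metis R.add.comm_inv_char a_inv_def)
qed

lemma h_inj: "inj_on h (carrier (Qp p))"
proof (rule inj_onI)
  fix A B assume A: "A \<in> carrier (Qp p)" and B: "B \<in> carrier (Qp p)" and e: "h A = h B"
  let ?D = "A \<oplus>\<^bsub>Qp p\<^esub> NegQ p B"
  have D: "?D \<in> carrier (Qp p)" using add_closed[OF p A neg_closed[OF p B]] .
  have hD: "h ?D = \<zero>\<^bsub>R\<^esub>"
    using ring_hom_add[OF h A neg_closed[OF p B]] h_neg[OF B] e h_closed[OF B] by (simp add: R.r_neg)
  show "A = B"
  proof (rule add_neg_zero_imp_eq[OF p A B], rule ccontr)
    assume nz: "?D \<noteq> \<zero>\<^bsub>Qp p\<^esub>"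
    have "h (?D \<otimes>\<^bsub>Qp p\<^esub> InvQ p ?D) = \<one>\<^bsub>R\<^esub>"
      using mult_inv[OF p D nz] ring_hom_one[OF h] by simp
    moreover have "h (?D \<otimes>\<^bsub>Qp p\<^esub> InvQ p ?D) = \<zero>\<^bsub>R\<^esub>"
      using ring_hom_mult[OF h D inv_closed[OF p D nz]] hD h_closed[OF inv_closed[OF p D nz]] by simp
    ultimately show False by simp
  qed
qed

lemma h_pow: "A \<in> carrier (Qp p) \<Longrightarrow> h (A [^]\<^bsub>Qp p\<^esub> (n::nat)) = h A [^]\<^bsub>R\<^esub> n"
  by (induct n) (simp_all add: ring_hom_one[OF h] ring_hom_mult[OF h] pow_closed[OF p])

lemma K_subfield: "subfield (h ` carrier (Qp p)) R"
proof (rule R.subfieldI')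
  show "subring (h ` carrier (Qp p)) R"
  proof (rule R.subringI)
    show "h ` carrier (Qp p) \<subseteq> carrier R" using h_closed by blast
    show "\<one>\<^bsub>R\<^esub> \<in> h ` carrier (Qp p)" using ring_hom_one[OF h] one_closed[OF p] by force
    show "\<ominus>\<^bsub>R\<^esub> x \<in> h ` carrier (Qp p)" if "x \<in> h ` carrier (Qp p)" for x
      using that h_neg neg_closed[OF p] by force
    show "x \<otimes>\<^bsub>R\<^esub> y \<in> h ` carrier (Qp p)" if "x \<in> h ` carrier (Qp p)" "y \<in> h ` carrier (Qp p)" for x y
      using that ring_hom_mult[OF h] mult_closed[OF p] by (smt (verit) image_iff)
    show "x \<oplus>\<^bsub>R\<^esub> y \<in> h ` carrier (Qp p)" if "x \<in> h ` carrier (Qp p)" "y \<in> h ` carrier (Qp p)" for x y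
      using that ring_hom_add[OF h] add_closed[OF p] by (smt (verit) image_iff)
  qed
  show "inv\<^bsub>R\<^esub> k \<in> h ` carrier (Qp p)" if kk: "k \<in> h ` carrier (Qp p) - {\<zero>\<^bsub>R\<^esub>}" for k
  proof -
    obtain A where A: "A \<in> carrier (Qp p)" "k = h A" using kk by blast
    have nz: "A \<noteq> \<zero>\<^bsub>Qp p\<^esub>" using kk A h_zero by auto
    have "h A \<otimes>\<^bsub>R\<^esub> h (InvQ p A) = \<one>\<^bsub>R\<^esub>"
      using ring_hom_mult[OF h A(1) inv_closed[OF p A(1) nz]] mult_inv[OF p A(1) nz] ring_hom_one[OF h] by simp
    hence "inv\<^bsub>R\<^esub> k = h (InvQ p A)"
      using A h_closed inv_closed[OF p A(1) nz] by (metis R.comm_inv_char)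
    thus ?thesis using inv_closed[OF p A(1) nz] by blast
  qed
qed

lemma key_divides:
  fixes N m :: nat
  assumes C: "C \<in> carrier (Qp p)" and N: "N > 0"
    and eq: "h C [^]\<^bsub>R\<^esub> (2 * N) = h (padic_class p (\<lambda>n. of_nat p)) [^]\<^bsub>R\<^esub> (2 * m)"
  shows "N dvd m"
proof -
  let ?P = "padic_class p (\<lambda>n. of_nat p)"
  have P: "?P \<in> carrier (Qp p)" by (rule cls_carrier[OF p cauchy_const[OF p]])
  have "h (C [^]\<^bsub>Qp p\<^esub> (2 * N)) = h (?P [^]\<^bsub>Qp p\<^esub> (2 * m))"
    using eq h_pow C P by simp
  hence "C [^]\<^bsub>Qp p\<^esub> (2 * N) = ?P [^]\<^bsub>Qp p\<^esub> (2 * m)"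
    using h_inj pow_closed[OF p C] pow_closed[OF p P] by (meson inj_onD)
  hence ab: "absQ p C ^ (2 * N) = absQ p ?P ^ (2 * m)"
    using absQ_pow[OF p C] absQ_pow[OF p P] by metis
  have aP: "absQ p ?P = real p powr (-1)"
    using absQ_const[OF p] pa_p[OF p] p_gt1[OF p] by (simp add: powr_minus)
  have p1: "real p > 1" using p_gt1[OF p] .
  have Cnz: "C \<noteq> \<zero>\<^bsub>Qp p\<^esub>"
  proof
    assume "C = \<zero>\<^bsub>Qp p\<^esub>"
    hence "absQ p C = 0" unfolding Qp_simps using absQ_const[OF p, of 0] pa_zero[OF p] by simp
    hence "absQ p C ^ (2 * N) = 0" using N by simp
    hence "absQ p ?P ^ (2 * m) = 0" using ab by simp
    thus False using aP p1 by simp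
  qed
  obtain k :: int where k: "absQ p C = real p powr k" using absQ_values[OF p C Cnz] by blast
  have e1: "(real p powr (-1)) ^ (2*m) = real p powr (- real (2*m))"
  proof -
    have "(real p powr (-1)) ^ (2*m) = (real p powr (-1)) powr real (2*m)"
      by (rule powr_realpow[symmetric]) (use p1 in simp)
    also have "\<dots> = real p powr (-1 * real (2*m))" by (rule powr_powr)
    finally show ?thesis by simp
  qed
  have e2: "(real p powr k) ^ (2*N) = real p powr (real_of_int k * real (2*N))"
  proof -
    have "(real p powr k) ^ (2*N) = (real p powr k) powr real (2*N)"
      by (rule powr_realpow[symmetric]) (use p1 in simp)
    also have "\<dots> = real p powr (real_of_int k * real (2*N))" by (rule powr_powr)
    finally show ?thesis .
  qed
  have "real p powr (real_of_int k * real (2 * N)) = real p powr (- real (2 * m))"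
    using ab unfolding k aP e1 e2 .
  hence "real_of_int k * real (2 * N) = - real (2 * m)"
    using powr_inj[of "real p" "real_of_int k * real (2 * N)" "- real (2 * m)"] p1 by simp
  hence "real_of_int (k * int (2 * N)) = real_of_int (- int (2 * m))" by simp
  hence "k * int (2 * N) = - int (2 * m)" by (rule of_int_eq_iff[THEN iffD1])
  hence "int (2 * m) = int (2 * N) * (- k)" by simp
  hence "int (2 * N) dvd int (2 * m)" by (rule dvdI)
  hence "2 * N dvd 2 * m" by (simp only: of_nat_dvd_iff)
  hence "N dvd m" by (simp add: nat_mult_dvd_cancel_disj)
  thus ?thesis by simp
qed

end

lemma (in field) norm_pow:
  fixes N :: nat
  assumes roots_over_carrier: "\<And>P. P \<in> carrier (poly_ring R) \<Longrightarrow> splitted P"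
  assumes "f \<in> carrier (poly_ring R)" "f \<noteq> []" "hd f = \<one>" "c \<in> carrier R"
    and "\<And>b. b \<in> carrier R \<Longrightarrow> eval f b = \<zero> \<Longrightarrow> b [^] N = c"
  shows "(eval f \<zero>) [^] (2 * N) = c [^] (2 * (length f - 1))"
  using assms(2-)
proof (induct "length f - 1" arbitrary: f)
  case 0
  hence "f = [\<one>]" by (cases f) auto
  thus ?case by simp
next
  case (Suc n f)
  have "splitted f" using roots_over_carrier Suc(3) by blast
  hence "size (roots f) = Suc n" unfolding splitted_def using Suc(2) by simp
  then obtain a where "a \<in># roots f" by (metis multiset_nonemptyE size_empty nat.simps(3))
  hence ra: "is_root f a" using roots_mem_iff_is_root[OF Suc(3)] by simp
  hence a: "a \<in> carrier R" "eval f a = \<zero>" unfolding is_root_def by auto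
  let ?b = "[\<one>, \<ominus> a]"
  have bc: "?b \<in> carrier (poly_ring R)" using a(1)
    by (simp add: univ_poly_carrier[symmetric] polynomial_def)
  have "?b pdivides f" using is_root_imp_pdivides[OF Suc(3) ra] .
  then obtain g where g: "g \<in> carrier (poly_ring R)" "f = ?b \<otimes>\<^bsub>poly_ring R\<^esub> g"
    unfolding pdivides_def factor_def by blast
  have fm: "f = poly_mult ?b g" using g(2) by (simp add: univ_poly_mult)
  have pb: "polynomial (carrier R) ?b" using bc univ_poly_carrier by blast
  have pg: "polynomial (carrier R) g" using g(1) univ_poly_carrier by blast
  have dg: "(length f - 1) = (if ?b = [] \<or> g = [] then 0 else (length ?b - 1) + (length g - 1))"
    unfolding fm by (rule poly_mult_degree_eq[OF carrier_is_subring pb pg])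
  have gne: "g \<noteq> []" using dg Suc(2) by (auto split: if_splits)
  have degg: "n = (length g - 1)" using dg Suc(2) gne by simp
  have "hd f = hd ?b \<otimes> hd g"
    unfolding fm by (rule poly_mult_lead_coeff[OF carrier_is_subring pb pg]) (use gne in auto)
  moreover have "hd g \<in> carrier R" using pg gne unfolding polynomial_def by (auto intro: hd_in_set)
  ultimately have lg: "hd g = \<one>" using Suc(5) by simp
  have setb: "set ?b \<subseteq> carrier R" using a(1) by auto
  have setg: "set g \<subseteq> carrier R" using pg unfolding polynomial_def by auto
  have ev: "eval f x = eval ?b x \<otimes> eval g x" if "x \<in> carrier R" for x
    unfolding fm by (rule eval_poly_mult[OF setb setg that])
  have rg: "b [^] N = c" if "b \<in> carrier R" "eval g b = \<zero>" for b
    using Suc(7)[OF that(1)] ev[OF that(1)] that eval_in_carrier[OF setb that(1)] by simp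
  have IH0: "(eval g \<zero>) [^] (2 * N) = c [^] (2 * (length g - 1))"
    by (rule Suc(1)[OF degg g(1) gne lg Suc(6)]) (rule rg)
  hence IH: "(eval g \<zero>) [^] (2 * N) = c [^] (2 * n)" using degg by simp
  have e0: "eval f \<zero> = \<ominus> a \<otimes> eval g \<zero>" using ev[of \<zero>] a(1) by simp
  have cg: "eval g \<zero> \<in> carrier R" using eval_in_carrier[OF setg zero_closed] .
  have aN: "a [^] N = c" using Suc(7)[OF a] .
  have "(\<ominus> a) [^] (2 * N) = ((\<ominus> a) [^] (2::nat)) [^] N" by (simp add: nat_pow_pow a(1))
  also have "(\<ominus> a) [^] (2::nat) = a [^] (2::nat)" using a(1) by (simp add: numeral_2_eq_2 nat_pow_Suc l_minus r_minus)
  also have "(a [^] (2::nat)) [^] N = (a [^] N) [^] (2::nat)" using a(1) by (simp add: nat_pow_pow mult.commute)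
  finally have ma: "(\<ominus> a) [^] (2 * N) = c [^] (2::nat)" unfolding aN .
  have "(eval f \<zero>) [^] (2 * N) = (\<ominus> a) [^] (2 * N) \<otimes> (eval g \<zero>) [^] (2 * N)"
    unfolding e0 using a(1) cg by (simp add: nat_pow_distrib)
  also have "\<dots> = c [^] (2::nat) \<otimes> c [^] (2 * n)" unfolding ma IH ..
  also have "\<dots> = c [^] (2 * Suc n)" using Suc(6) by (simp add: nat_pow_mult)
  finally show ?case unfolding Suc(2)[symmetric] .
qed

lemma (in ring) eval_rep_zero:
  assumes "c \<in> carrier R" "x \<in> carrier R"
  shows "eval (replicate k \<zero> @ [c]) x = c"
  using assms by (induct k) auto

lemma (in ring) eval_Xq:
  assumes "c \<in> carrier R" "x \<in> carrier R" "N > 0"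
  shows "eval (\<one> # replicate (N - 1) \<zero> @ [c]) x = x [^] N \<oplus> c"
proof -
  have "eval (\<one> # replicate (N - 1) \<zero> @ [c]) x = \<one> \<otimes> x [^] (length (replicate (N - 1) \<zero> @ [c])) \<oplus> eval (replicate (N - 1) \<zero> @ [c]) x"
    by simp
  also have "\<dots> = x [^] N \<oplus> c" using assms eval_rep_zero[OF assms(1,2)] by simp
  finally show ?thesis .
qed

lemma (in domain) Xq_poly:
  assumes "subring K R" "c \<in> K"
  shows "(\<one> # replicate k \<zero> @ [c]) \<in> carrier (K[X])"
proof -
  have "\<one> \<in> K" "\<zero> \<in> K" using subringE[OF assms(1)] by auto
  hence "set (\<one> # replicate k \<zero> @ [c]) \<subseteq> K" using assms(2) by auto
  moreover have "hd (\<one> # replicate k \<zero> @ [c]) \<noteq> \<zero>" by simp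
  ultimately show ?thesis unfolding univ_poly_carrier[symmetric] polynomial_def by simp
qed

lemma (in ring) eval_in_subring:
  assumes "subring K R" "set p \<subseteq> K" "x \<in> K"
  shows "eval p x \<in> K"
proof -
  have pw: "x [^] (n::nat) \<in> K" for n
    by (induct n) (use subringE[OF assms(1)] assms(3) in auto)
  show ?thesis using assms(2)
    by (induct p) (use subringE[OF assms(1)] pw in auto)
qed

lemma (in ring) fin_dim_bigger:
  assumes K: "subfield K R" and M: "subfield M R" and L: "subring L R"
    and KM: "K \<subseteq> M" and hML: "M \<subseteq> L" and fd: "finite_dimension K L"
  shows "finite_dimension M L"
proof -
  obtain n where "dimension n K L" using fd by auto
  then obtain Vs where Vs: "set Vs \<subseteq> carrier R" "Span K Vs = L" using exists_base[OF K] by blast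
  have "Span M Vs = L"
  proof
    show "L \<subseteq> Span M Vs"
      unfolding Vs(2)[symmetric] Span_eq_combine_set[OF K Vs(1)] Span_eq_combine_set[OF M Vs(1)] using KM by blast
    have sub: "subgroup L (add_monoid R)" using L by (rule subring.axioms(1))
    have VsL: "set Vs \<subseteq> L" using Span_base_incl[OF K Vs(1)] Vs(2) by simp
    have "M <#> set Vs \<subseteq> L"
      unfolding set_mult_def using hML VsL subringE(6)[OF L] by blast
    thus "Span M Vs \<subseteq> L" by (rule Span_min[OF M Vs(1) sub])
  qed
  thus ?thesis using Span_finite_dimension[OF M Vs(1)] by simp
qed

theorem mainTheorem12:
  fixes R :: "('a, 'b) ring_scheme"
    and F Xi :: "'a set"
    and h :: "(nat \<Rightarrow> rat) set \<Rightarrow> 'a"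
    and l p :: nat
  assumes "Factorial_Ring.prime l"
    and "Factorial_Ring.prime p"
    and "algebraically_closed R"
    and "h \<in> ring_hom (Qp p) R"
    and "subfield F R"
    and "h ` carrier (Qp p) \<subseteq> F"
    and "ring.finite_dimension R (h ` carrier (Qp p)) F"
    and "subfield Xi R"
    and "F \<subseteq> Xi"
    and "\<forall>x \<in> Xi. \<not> ring.transcendental R F x"
    and "{x \<in> carrier R. x [^]\<^bsub>R\<^esub> l = \<one>\<^bsub>R\<^esub>} \<subseteq> Xi"
    and "\<forall>x \<in> Xi - {\<zero>\<^bsub>R\<^esub>}. \<exists>y \<in> Xi - {\<zero>\<^bsub>R\<^esub>}. y [^]\<^bsub>R\<^esub> l = x"
  shows "supernatural_degree R F Xi l = \<infinity>"
proof -
  note l = assms(1) and p = assms(2) and h = assms(4) and Ff = assms(5) and KF = assms(6)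
    and fdKF = assms(7) and Xif = assms(8) and FXi = assms(9) and alg = assms(10) and lroot = assms(12)
  have Rf: "field R" using assms(3) by (rule algebraically_closed.axioms(1))
  interpret R: field R by (rule Rf)
  have split: "\<And>P. P \<in> carrier (poly_ring R) \<Longrightarrow> R.splitted P"
    using algebraically_closed.roots_over_carrier[OF assms(3)] by blast
  define K where "K = h ` carrier (Qp p)"
  define P where "P = padic_class p (\<lambda>n. of_nat p)"
  define pi where "pi = h P"
  have Kf: "subfield K R" unfolding K_def by (rule K_subfield[OF p Rf h])
  have Ks: "subring K R" using subfieldE(1)[OF Kf] .
  have Fs: "subring F R" using subfieldE(1)[OF Ff] .
  have Xis: "subring Xi R" using subfieldE(1)[OF Xif] .
  have KF': "K \<subseteq> F" using KF unfolding K_def .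
  have fdKF': "R.finite_dimension K F" using fdKF unfolding K_def .
  have Fc: "F \<subseteq> carrier R" using subringE(1)[OF Fs] .
  have Xic: "Xi \<subseteq> carrier R" using subringE(1)[OF Xis] .
  have Pc: "P \<in> carrier (Qp p)" unfolding P_def by (rule cls_carrier[OF p cauchy_const[OF p]])
  have piK: "pi \<in> K" unfolding pi_def K_def using Pc by blast
  have pic: "pi \<in> carrier R" using piK subringE(1)[OF Ks] by blast
  have piXi: "pi \<in> Xi" using piK KF' FXi by blast
  have pinz: "pi \<noteq> \<zero>\<^bsub>R\<^esub>"
  proof
    assume "pi = \<zero>\<^bsub>R\<^esub>"
    hence "h P = h \<zero>\<^bsub>Qp p\<^esub>" unfolding pi_def using h_zero[OF p Rf h] by simp
    hence "P = \<zero>\<^bsub>Qp p\<^esub>" using h_inj[OF p Rf h] Pc zero_closed[OF p] by (meson inj_onD)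
    hence "absQ p P = absQ p \<zero>\<^bsub>Qp p\<^esub>" by simp
    thus False unfolding P_def Qp_simps absQ_const[OF p] using pa_p[OF p] p_gt1[OF p] pa_zero[OF p] by simp
  qed
  have roots: "\<exists>\<alpha> \<in> Xi - {\<zero>\<^bsub>R\<^esub>}. \<alpha> [^]\<^bsub>R\<^esub> (l ^ n) = pi" for n
  proof (induct n)
    case 0 thus ?case using piXi pinz pic by (intro bexI[of _ pi]) auto
  next
    case (Suc n)
    then obtain a where a: "a \<in> Xi - {\<zero>\<^bsub>R\<^esub>}" "a [^]\<^bsub>R\<^esub> (l ^ n) = pi" by blast
    then obtain y where y: "y \<in> Xi - {\<zero>\<^bsub>R\<^esub>}" "y [^]\<^bsub>R\<^esub> l = a" using lroot by blast
    have yc: "y \<in> carrier R" using y Xic by blast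
    have "y [^]\<^bsub>R\<^esub> (l ^ Suc n) = (y [^]\<^bsub>R\<^esub> l) [^]\<^bsub>R\<^esub> (l ^ n)"
      using yc by (simp add: R.nat_pow_pow)
    thus ?case using y a by auto
  qed
  define d where "d = R.dim K F"
  have dnz: "d \<noteq> 0"
  proof
    assume "d = 0"
    hence "R.dimension 0 K F" using R.finite_dimensionE[OF Kf fdKF'] unfolding d_def over_def by simp
    hence "F = {\<zero>\<^bsub>R\<^esub>}" by (rule R.dimension_zero[OF Kf])
    thus False using subringE(3)[OF Fs] by simp
  qed
  have main: "\<exists>L. subfield L R \<and> F \<subseteq> L \<and> L \<subseteq> Xi \<and> R.finite_dimension F L \<and>
       n \<le> multiplicity l (R.dim F L) + multiplicity l d" for n
  proof -
    define N where "N = l ^ n"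
    have Npos: "N > 0" unfolding N_def using l prime_gt_0_nat by simp
    obtain \<alpha> where \<alpha>: "\<alpha> \<in> Xi" "\<alpha> [^]\<^bsub>R\<^esub> N = pi" using roots[of n] unfolding N_def by blast
    have \<alpha>c: "\<alpha> \<in> carrier R" using \<alpha>(1) Xic by blast
    have \<alpha>F: "(R.algebraic over F) \<alpha>" using alg \<alpha>(1) unfolding over_def by blast
    define L where "L = R.simple_extension F \<alpha>"
    have Lf: "subfield L R" unfolding L_def using R.simple_extension_is_subfield[OF Ff \<alpha>c] \<alpha>F by blast
    have Ls: "subring L R" using subfieldE(1)[OF Lf] .
    have FL: "F \<subseteq> L" unfolding L_def by (rule R.simple_extension_incl[OF Fc \<alpha>c])
    have \<alpha>L: "\<alpha> \<in> L" unfolding L_def by (rule R.simple_extension_mem[OF Fs \<alpha>c])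
    have LXi: "L \<subseteq> Xi" unfolding L_def R.simple_extension_minimal[OF Fs \<alpha>c] using Xis FXi \<alpha>(1) by blast
    have fdFL: "R.finite_dimension F L" unfolding L_def using R.finite_dimension_simple_extension[OF Ff \<alpha>c] \<alpha>F by blast
    have fdKL: "R.finite_dimension K L" and tow1: "(R.dim over K) L = (R.dim over K) F * (R.dim over F) L"
      using R.telescopic_base_dim[OF Kf Ff fdKF' fdFL] by auto
    have \<alpha>K: "(R.algebraic over K) \<alpha>" by (rule R.finite_dimension_imp_algebraic[OF Kf Ls fdKL \<alpha>L])
    define M where "M = R.simple_extension K \<alpha>"
    have Mf: "subfield M R" unfolding M_def using R.simple_extension_is_subfield[OF Kf \<alpha>c] \<alpha>K by blast
    have KM: "K \<subseteq> M" unfolding M_def by (rule R.simple_extension_incl[OF subringE(1)[OF Ks] \<alpha>c])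
    have hMLs: "M \<subseteq> L" unfolding M_def R.simple_extension_minimal[OF Ks \<alpha>c] using Ls KF' FL \<alpha>L by blast
    have fdKM: "R.finite_dimension K M" unfolding M_def using R.finite_dimension_simple_extension[OF Kf \<alpha>c] \<alpha>K by blast
    have dimM: "(R.dim over K) M = length (R.Irr K \<alpha>) - 1"
      unfolding M_def by (rule R.simple_extension_dim[OF Kf \<alpha>c \<alpha>K])
    have fdML: "R.finite_dimension M L" by (rule R.fin_dim_bigger[OF Kf Mf Ls KM hMLs fdKL])
    have tow2: "(R.dim over K) L = (R.dim over K) M * (R.dim over M) L"
      using R.telescopic_base_dim[OF Kf Mf fdKM fdML] by auto
    define f where "f = R.Irr K \<alpha>"
    define deg where "deg = length f - 1"
    have deg_dvd: "deg dvd d * R.dim F L"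
      using tow1 tow2 dimM unfolding deg_def f_def d_def over_def by (metis dvd_triv_left)
    have fK: "f \<in> carrier (K[X]\<^bsub>R\<^esub>)" and fhd: "hd f = \<one>\<^bsub>R\<^esub>" and f\<alpha>: "R.eval f \<alpha> = \<zero>\<^bsub>R\<^esub>"
      using R.IrrE[OF Kf \<alpha>c \<alpha>K] unfolding f_def by auto
    have fpolK: "polynomial\<^bsub>R\<^esub> K f" using fK univ_poly_carrier by blast
    have fC: "f \<in> carrier (poly_ring R)"
      using R.carrier_polynomial[OF Ks fpolK] univ_poly_carrier by blast
    have fne: "f \<noteq> []"
    proof
      assume "f = []"
      hence "(R.dim over K) M = 0" using dimM unfolding f_def by simp
      hence "R.dimension 0 K M" using R.finite_dimensionE[OF Kf fdKM] by simp
      hence "M = {\<zero>\<^bsub>R\<^esub>}" by (rule R.dimension_zero[OF Kf])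
      thus False using subringE(3)[OF Ks] KM by auto
    qed
    define q where "q = \<one>\<^bsub>R\<^esub> # replicate (N - 1) \<zero>\<^bsub>R\<^esub> @ [\<ominus>\<^bsub>R\<^esub> pi]"
    have qK: "q \<in> carrier (K[X]\<^bsub>R\<^esub>)" unfolding q_def
      by (rule R.Xq_poly[OF Ks subringE(5)[OF Ks piK]])
    have evq: "R.eval q x = x [^]\<^bsub>R\<^esub> N \<oplus>\<^bsub>R\<^esub> \<ominus>\<^bsub>R\<^esub> pi" if "x \<in> carrier R" for x
      unfolding q_def by (rule R.eval_Xq[OF R.a_inv_closed[OF pic] that Npos])
    have q\<alpha>: "R.eval q \<alpha> = \<zero>\<^bsub>R\<^esub>" using evq[OF \<alpha>c] \<alpha>(2) pic by (simp add: R.r_neg)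
    have fdivq: "f pdivides\<^bsub>R\<^esub> q" unfolding f_def by (rule R.Irr_minimal[OF Kf \<alpha>c \<alpha>K qK q\<alpha>])
    have froots: "b [^]\<^bsub>R\<^esub> N = pi" if "b \<in> carrier R" "R.eval f b = \<zero>\<^bsub>R\<^esub>" for b
    proof -
      have "R.eval q b = \<zero>\<^bsub>R\<^esub>" by (rule R.pdivides_imp_root_sharing[OF fC fdivq that])
      hence "b [^]\<^bsub>R\<^esub> N \<ominus>\<^bsub>R\<^esub> pi = \<zero>\<^bsub>R\<^esub>" using evq[OF that(1)] by (simp add: a_minus_def)
      thus ?thesis using R.r_right_minus_eq that(1) pic by blast
    qed
    have np: "(R.eval f \<zero>\<^bsub>R\<^esub>) [^]\<^bsub>R\<^esub> (2 * N) = pi [^]\<^bsub>R\<^esub> (2 * deg)"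
      unfolding deg_def by (rule R.norm_pow[OF split fC fne fhd pic froots])
    have setf: "set f \<subseteq> K" using fpolK fne unfolding polynomial_def by auto
    have "R.eval f \<zero>\<^bsub>R\<^esub> \<in> K" by (rule R.eval_in_subring[OF Ks setf subringE(2)[OF Ks]])
    then obtain C where C: "C \<in> carrier (Qp p)" "R.eval f \<zero>\<^bsub>R\<^esub> = h C" unfolding K_def by blast
    have "h C [^]\<^bsub>R\<^esub> (2 * N) = h P [^]\<^bsub>R\<^esub> (2 * deg)" using np C(2) unfolding pi_def by simp
    hence "N dvd deg" using key_divides[OF p Rf h C(1) Npos] unfolding P_def by blast
    hence Ndvd: "l ^ n dvd d * R.dim F L" using deg_dvd unfolding N_def by (rule dvd_trans)
    have enz: "R.dim F L \<noteq> 0"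
    proof
      assume "R.dim F L = 0"
      hence "R.dimension 0 F L" using R.finite_dimensionE[OF Ff fdFL] unfolding over_def by simp
      hence "L = {\<zero>\<^bsub>R\<^esub>}" by (rule R.dimension_zero[OF Ff])
      thus False using subringE(3)[OF Fs] FL by auto
    qed
    have "n \<le> multiplicity l (d * R.dim F L)"
      using Ndvd dnz enz l by (intro multiplicity_geI) (auto simp: prime_def)
    also have "\<dots> = multiplicity l d + multiplicity l (R.dim F L)"
      using dnz enz l by (simp add: prime_elem_multiplicity_mult_distrib)
    finally show ?thesis using Lf FL LXi fdFL by (intro exI[of _ L]) auto
  qed
  let ?A = "{L. subfield L R \<and> F \<subseteq> L \<and> L \<subseteq> Xi \<and> R.finite_dimension F L}"
  let ?f = "\<lambda>L. enat (multiplicity l (R.dim F L))"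
  have "(SUP L\<in>?A. ?f L) = \<infinity>"
  proof (rule ccontr)
    assume ne: "(SUP L\<in>?A. ?f L) \<noteq> \<infinity>"
    then obtain k where k: "(SUP L\<in>?A. ?f L) = enat k" by auto
    obtain L where L: "L \<in> ?A" "k + 1 + multiplicity l d \<le> multiplicity l (R.dim F L) + multiplicity l d"
      using main[of "k + 1 + multiplicity l d"] by blast
    have "?f L \<le> enat k" using SUP_upper[OF L(1), of ?f] k by simp
    thus False using L(2) by simp
  qed
  thus ?thesis unfolding supernatural_degree_def .
qed

end
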